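(* Let $\rho_{mkt}(t)$ be a density matrix on $\mathbb{C}^N$ with initial state diagonal in the basis $\{|f_i\rangle\}$, $\rho_{mkt}(0)=\sum_{i=1}^Np_i(0)|f_i\rangle\langle f_i|$, evolving according to \[ \frac{d\rho_{mkt}(t)}{dt}=\sigma^2\Big(A_u\rho_{mkt}(t)A_d+A_d\rho_{mkt}(t)A_u-\tfrac{1}{2}\{A_uA_d+A_dA_u,\rho_{mkt}(t)\}\Big), \] with $\sigma^2>0$. Then the von Neumann entropy $S(\rho_{mkt}(t))=-\mathrm{Tr}[\rho_{mkt}(t)\log\rho_{mkt}(t)]$ increases monotonically in $t$, and \[ \lim_{t\to\infty}\big(-\mathrm{Tr}[\rho_{mkt}(t)\log(\rho_{mkt}(t))]\big)=\log(N). \]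
   Context: $|f_1\rangle,\dots,|f_N\rangle$ is the orthonormal basis of $\mathbb{C}^N$ (eigenvectors of the price operator), $A_u=\sum_{i=1}^{N-1}|f_{i+1}\rangle\langle f_i|$, $A_d=\sum_{i=1}^{N-1}|f_i\rangle\langle f_{i+1}|$, and $\{\cdot,\cdot\}$ is the anticommutator. This is the "classical" market dynamics arising when the environment stays in its maximum-entropy state and the inhomogeneous term vanishes; in that case $\sigma^2=\kappa(K-1)/K$ with coupling constant $\kappa>0$ and $K\ge 2$ environment levels. *)

theory Defs
  imports "HOL-Analysis.Analysis" "Jordan_Normal_Form.Schur_Decomposition"
begin

text \<open>Basis vectors f_1,...,f_N are the standard basis vectors e_0,...,e_(N-1) of C^N.
  A_u = sum_(i=1)^(N-1) |f_(i+1)><f_i| has entry 1 at (row i+1, column i);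
  A_d = sum_(i=1)^(N-1) |f_i><f_(i+1)| has entry 1 at (row i, column i+1).\<close>

definition A_u :: "nat \<Rightarrow> complex mat" where
  "A_u N = Matrix.mat N N (\<lambda>(r, c). if r = c + 1 then 1 else 0)"

definition A_d :: "nat \<Rightarrow> complex mat" where
  "A_d N = Matrix.mat N N (\<lambda>(r, c). if c = r + 1 then 1 else 0)"

definition mkt_generator :: "real \<Rightarrow> nat \<Rightarrow> complex mat \<Rightarrow> complex mat" where
  "mkt_generator sigma2 N \<rho> =
     complex_of_real sigma2 \<cdot>\<^sub>m
       (A_u N * \<rho> * A_d N + A_d N * \<rho> * A_u N
        - (complex_of_real (1/2)) \<cdot>\<^sub>m
            ((A_u N * A_d N + A_d N * A_u N) * \<rho> + \<rho> * (A_u N * A_d N + A_d N * A_u N)))"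

definition unitary_mat :: "nat \<Rightarrow> complex mat \<Rightarrow> bool" where
  "unitary_mat N U \<longleftrightarrow> U \<in> carrier_mat N N \<and> mat_adjoint U * U = 1\<^sub>m N \<and> U * mat_adjoint U = 1\<^sub>m N"

definition herm_mat_fun :: "(real \<Rightarrow> real) \<Rightarrow> complex mat \<Rightarrow> complex mat" where
  "herm_mat_fun f A = (SOME B. \<exists>U (lam :: nat \<Rightarrow> real).
      unitary_mat (dim_row A) U \<and>
      A = U * mat_diag (dim_row A) (\<lambda>i. complex_of_real (lam i)) * mat_adjoint U \<and>
      B = U * mat_diag (dim_row A) (\<lambda>i. complex_of_real (f (lam i))) * mat_adjoint U)"

definition mat_trace :: "complex mat \<Rightarrow> complex" where
  "mat_trace A = (\<Sum>i<dim_row A. A $$ (i, i))"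

text \<open>von Neumann entropy S(rho) = - Tr[rho log rho], with the usual convention 0 log 0 = 0,
  i.e. rho log rho is the matrix function x \<mapsto> x ln x applied to rho.\<close>
definition von_neumann_entropy :: "complex mat \<Rightarrow> real" where
  "von_neumann_entropy \<rho> = - Re (mat_trace (herm_mat_fun (\<lambda>x. x * ln x) \<rho>))"

end

theory Submission
  imports Defs
begin



lemma Au_mult: assumes "\<rho> \<in> carrier_mat N N"
  shows "A_u N * \<rho> = Matrix.mat N N (\<lambda>(i,k). if 1 \<le> i then \<rho> $$ (i-1,k) else 0)"
proof (rule eq_matI)
  fix i j assume ij: "i < dim_row (Matrix.mat N N (\<lambda>(i,k). if 1 \<le> i then \<rho> $$ (i-1,k) else 0))"
     "j < dim_col (Matrix.mat N N (\<lambda>(i,k). if 1 \<le> i then \<rho> $$ (i-1,k) else 0))"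
  have "(A_u N * \<rho>) $$ (i,j) = (\<Sum>l<N. (if i = l + 1 then 1 else 0) * \<rho> $$ (l,j))"
    using ij assms by (simp add: A_u_def scalar_prod_def atLeast0LessThan)
  also have "\<dots> = (\<Sum>l<N. if l = i - 1 \<and> 1 \<le> i then \<rho> $$ (l,j) else 0)"
    by (rule sum.cong) auto
  also have "\<dots> = (if 1 \<le> i then \<rho> $$ (i-1,j) else 0)"
    using ij by (auto simp: sum.delta)
  finally show "(A_u N * \<rho>) $$ (i,j) = Matrix.mat N N (\<lambda>(i,k). if 1 \<le> i then \<rho> $$ (i-1,k) else 0) $$ (i,j)"
    using ij by simp
qed (use assms in \<open>auto simp: A_u_def\<close>)

lemma Ad_mult: assumes "\<rho> \<in> carrier_mat N N"
  shows "A_d N * \<rho> = Matrix.mat N N (\<lambda>(i,k). if i + 1 < N then \<rho> $$ (i+1,k) else 0)"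
proof (rule eq_matI)
  fix i j assume ij: "i < dim_row (Matrix.mat N N (\<lambda>(i,k). if i + 1 < N then \<rho> $$ (i+1,k) else 0))"
     "j < dim_col (Matrix.mat N N (\<lambda>(i,k). if i + 1 < N then \<rho> $$ (i+1,k) else 0))"
  have "(A_d N * \<rho>) $$ (i,j) = (\<Sum>l<N. (if l = i + 1 then 1 else 0) * \<rho> $$ (l,j))"
    using ij assms by (simp add: A_d_def scalar_prod_def atLeast0LessThan)
  also have "\<dots> = (\<Sum>l<N. if l = i + 1 then \<rho> $$ (l,j) else 0)"
    by (rule sum.cong) auto
  also have "\<dots> = (if i + 1 < N then \<rho> $$ (i+1,j) else 0)"
    using ij by (auto simp: sum.delta)
  finally show "(A_d N * \<rho>) $$ (i,j) = Matrix.mat N N (\<lambda>(i,k). if i + 1 < N then \<rho> $$ (i+1,k) else 0) $$ (i,j)"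
    using ij by simp
qed (use assms in \<open>auto simp: A_d_def\<close>)

lemma mult_Ad: assumes "\<rho> \<in> carrier_mat N N"
  shows "\<rho> * A_d N = Matrix.mat N N (\<lambda>(i,j). if 1 \<le> j then \<rho> $$ (i,j-1) else 0)"
proof (rule eq_matI)
  fix i j assume ij: "i < dim_row (Matrix.mat N N (\<lambda>(i,j). if 1 \<le> j then \<rho> $$ (i,j-1) else 0))"
     "j < dim_col (Matrix.mat N N (\<lambda>(i,j). if 1 \<le> j then \<rho> $$ (i,j-1) else 0))"
  have "(\<rho> * A_d N) $$ (i,j) = (\<Sum>l<N. \<rho> $$ (i,l) * (if j = l + 1 then 1 else 0))"
    using ij assms by (simp add: A_d_def scalar_prod_def atLeast0LessThan)
  also have "\<dots> = (\<Sum>l<N. if l = j - 1 \<and> 1 \<le> j then \<rho> $$ (i,l) else 0)"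
    by (rule sum.cong) auto
  also have "\<dots> = (if 1 \<le> j then \<rho> $$ (i,j-1) else 0)"
    using ij by (auto simp: sum.delta)
  finally show "(\<rho> * A_d N) $$ (i,j) = Matrix.mat N N (\<lambda>(i,j). if 1 \<le> j then \<rho> $$ (i,j-1) else 0) $$ (i,j)"
    using ij by simp
qed (use assms in \<open>auto simp: A_d_def\<close>)

lemma mult_Au: assumes "\<rho> \<in> carrier_mat N N"
  shows "\<rho> * A_u N = Matrix.mat N N (\<lambda>(i,j). if j + 1 < N then \<rho> $$ (i,j+1) else 0)"
proof (rule eq_matI)
  fix i j assume ij: "i < dim_row (Matrix.mat N N (\<lambda>(i,j). if j + 1 < N then \<rho> $$ (i,j+1) else 0))"
     "j < dim_col (Matrix.mat N N (\<lambda>(i,j). if j + 1 < N then \<rho> $$ (i,j+1) else 0))"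
  have "(\<rho> * A_u N) $$ (i,j) = (\<Sum>l<N. \<rho> $$ (i,l) * (if l = j + 1 then 1 else 0))"
    using ij assms by (simp add: A_u_def scalar_prod_def atLeast0LessThan)
  also have "\<dots> = (\<Sum>l<N. if l = j + 1 then \<rho> $$ (i,l) else 0)"
    by (rule sum.cong) auto
  also have "\<dots> = (if j + 1 < N then \<rho> $$ (i,j+1) else 0)"
    using ij by (auto simp: sum.delta)
  finally show "(\<rho> * A_u N) $$ (i,j) = Matrix.mat N N (\<lambda>(i,j). if j + 1 < N then \<rho> $$ (i,j+1) else 0) $$ (i,j)"
    using ij by simp
qed (use assms in \<open>auto simp: A_u_def\<close>)

definition dg :: "nat \<Rightarrow> nat \<Rightarrow> real" where
  "dg N i = (if 1 \<le> i then 1 else 0) + (if i + 1 < N then 1 else 0)"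

lemma AA_sum: "A_u N * A_d N + A_d N * A_u N = mat_diag N (\<lambda>i. complex_of_real (dg N i))"
proof -
  have c: "A_d N \<in> carrier_mat N N" "A_u N \<in> carrier_mat N N" by (auto simp: A_u_def A_d_def)
  show ?thesis
    unfolding Au_mult[OF c(1)] Ad_mult[OF c(2)]
    by (rule eq_matI) (auto simp: mat_diag_def A_u_def A_d_def dg_def)
qed

lemma gen_entry:
  assumes "\<rho> \<in> carrier_mat N N" "i < N" "j < N"
  shows "mkt_generator s N \<rho> $$ (i,j) = complex_of_real s *
    ((if 1 \<le> i \<and> 1 \<le> j then \<rho> $$ (i-1,j-1) else 0)
     + (if i + 1 < N \<and> j + 1 < N then \<rho> $$ (i+1,j+1) else 0)
     - complex_of_real ((dg N i + dg N j) / 2) * \<rho> $$ (i,j))"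
proof -
  have c: "A_d N \<in> carrier_mat N N" "A_u N \<in> carrier_mat N N" by (auto simp: A_u_def A_d_def)
  have m1: "A_u N * \<rho> * A_d N = Matrix.mat N N (\<lambda>(i,j). if 1 \<le> i \<and> 1 \<le> j then \<rho> $$ (i-1,j-1) else 0)"
    unfolding Au_mult[OF assms(1)] by (subst mult_Ad) (auto intro!: eq_matI)
  have m2: "A_d N * \<rho> * A_u N = Matrix.mat N N (\<lambda>(i,j). if i + 1 < N \<and> j + 1 < N then \<rho> $$ (i+1,j+1) else 0)"
    unfolding Ad_mult[OF assms(1)] by (subst mult_Au) (auto intro!: eq_matI)
  have m3: "mat_diag N (\<lambda>i. complex_of_real (dg N i)) * \<rho> = Matrix.mat N N (\<lambda>(i,j). complex_of_real (dg N i) * \<rho> $$ (i,j))"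
    by (rule mat_diag_mult_left[OF assms(1)])
  have m4: "\<rho> * mat_diag N (\<lambda>i. complex_of_real (dg N i)) = Matrix.mat N N (\<lambda>(i,j). \<rho> $$ (i,j) * complex_of_real (dg N j))"
    by (rule mat_diag_mult_right[OF assms(1)])
  show ?thesis
    unfolding mkt_generator_def AA_sum m1 m2 m3 m4 using assms
    by (simp add: field_simps)
qed



lemma adj_carrier: "U \<in> carrier_mat n m \<Longrightarrow> mat_adjoint U \<in> carrier_mat m n"
  unfolding mat_adjoint_def by auto

lemma adj_index: "U \<in> carrier_mat n m \<Longrightarrow> i < m \<Longrightarrow> j < n \<Longrightarrow>
   mat_adjoint U $$ (i,j) = cnj (U $$ (j,i))"
  unfolding mat_adjoint_def by (auto simp: mat_of_rows_def)

lemma adj_one: "mat_adjoint (1\<^sub>m N) = (1\<^sub>m N :: complex mat)"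
    by (rule eq_matI) (auto simp: adj_index[of _ N N] adj_carrier[of _ N N, THEN carrier_matD(1)]
        adj_carrier[of _ N N, THEN carrier_matD(2)])

lemma unitary_one: "unitary_mat N (1\<^sub>m N)"
  unfolding unitary_mat_def adj_one by simp

lemma UDU_entry:
  assumes U: "U \<in> carrier_mat N N" and i: "i < N" and j: "j < N"
  shows "(U * mat_diag N g * mat_adjoint U) $$ (i,j) = (\<Sum>k<N. U $$ (i,k) * g k * cnj (U $$ (j,k)))"
proof -
  have "U * mat_diag N g = Matrix.mat N N (\<lambda>(i,j). U $$ (i,j) * g j)"
    by (rule mat_diag_mult_right[OF U])
  then show ?thesis using U i j adj_carrier[OF U]
    by (simp add: scalar_prod_def atLeast0LessThan adj_index[OF U])
qed

lemma unitary_sums: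
  assumes "unitary_mat N U" "k < N"
  shows "(\<Sum>i<N. U $$ (i,k) * cnj (U $$ (i,k))) = 1" "(\<Sum>i<N. U $$ (k,i) * cnj (U $$ (k,i))) = 1"
proof -
  have U: "U \<in> carrier_mat N N" and h1: "mat_adjoint U * U = 1\<^sub>m N" and h2: "U * mat_adjoint U = 1\<^sub>m N"
    using assms unfolding unitary_mat_def by auto
  have "(mat_adjoint U * U) $$ (k,k) = 1" using h1 assms by simp
  then show "(\<Sum>i<N. U $$ (i,k) * cnj (U $$ (i,k))) = 1"
    using U adj_carrier[OF U] assms
    by (simp add: scalar_prod_def atLeast0LessThan adj_index[OF U] mult.commute)
  have "(U * mat_adjoint U) $$ (k,k) = 1" using h2 assms by simp
  then show "(\<Sum>i<N. U $$ (k,i) * cnj (U $$ (k,i))) = 1"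
    using U adj_carrier[OF U] assms
    by (simp add: scalar_prod_def atLeast0LessThan adj_index[OF U])
qed

lemma hmf_diag:
  fixes q :: "nat \<Rightarrow> real"
  shows "mat_trace (herm_mat_fun f (mat_diag N (\<lambda>i. complex_of_real (q i))))
       = (\<Sum>i<N. complex_of_real (f (q i)))"
proof -
  define A where "A = mat_diag N (\<lambda>i. complex_of_real (q i))"
  have dA: "dim_row A = N" unfolding A_def mat_diag_def by simp
  have ex: "\<exists>B. \<exists>U (lam :: nat \<Rightarrow> real).
      unitary_mat (dim_row A) U \<and>
      A = U * mat_diag (dim_row A) (\<lambda>i. complex_of_real (lam i)) * mat_adjoint U \<and>
      B = U * mat_diag (dim_row A) (\<lambda>i. complex_of_real (f (lam i))) * mat_adjoint U"
  proof (intro exI conjI)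
    show "unitary_mat (dim_row A) (1\<^sub>m N)" using dA unitary_one by simp
    show "A = 1\<^sub>m N * mat_diag (dim_row A) (\<lambda>i. complex_of_real (q i)) * mat_adjoint (1\<^sub>m N)"
      unfolding adj_one dA unfolding A_def using mat_diag_dim[of N "\<lambda>i. complex_of_real (q i)"] by (metis left_mult_one_mat right_mult_one_mat mat_diag_dim)
  qed simp
  obtain U lam where Uu: "unitary_mat N U"
    and AU: "A = U * mat_diag N (\<lambda>i. complex_of_real (lam i)) * mat_adjoint U"
    and BU: "herm_mat_fun f A = U * mat_diag N (\<lambda>i. complex_of_real (f (lam i))) * mat_adjoint U"
    using someI_ex[OF ex] unfolding herm_mat_fun_def dA by blast
  have U: "U \<in> carrier_mat N N" using Uu unfolding unitary_mat_def by auto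
  define w where "w i k = U $$ (i,k) * cnj (U $$ (i,k))" for i k
  have tr: "mat_trace (herm_mat_fun f A) = (\<Sum>k<N. complex_of_real (f (lam k)))"
  proof -
    have "mat_trace (herm_mat_fun f A) = (\<Sum>i<N. \<Sum>k<N. w i k * complex_of_real (f (lam k)))"
      unfolding mat_trace_def BU using U
      by (simp add: UDU_entry w_def mult_ac)
    also have "\<dots> = (\<Sum>k<N. (\<Sum>i<N. w i k) * complex_of_real (f (lam k)))"
      by (subst sum.swap) (simp add: sum_distrib_right)
    also have "\<dots> = (\<Sum>k<N. complex_of_real (f (lam k)))"
      using unitary_sums(1)[OF Uu] by (simp add: w_def)
    finally show ?thesis .
  qed
  have AU2: "A * U = U * mat_diag N (\<lambda>i. complex_of_real (lam i))"
  proof -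
    have "A * U = U * mat_diag N (\<lambda>i. complex_of_real (lam i)) * (mat_adjoint U * U)"
      unfolding AU
      by (rule assoc_mult_mat[of "U * mat_diag N (\<lambda>i. complex_of_real (lam i))" N N "mat_adjoint U" N U N])
        (use U adj_carrier[OF U] in auto)
    also have "\<dots> = U * mat_diag N (\<lambda>i. complex_of_real (lam i))"
      using Uu U unfolding unitary_mat_def
      by (metis (no_types, lifting) right_mult_one_mat mult_carrier_mat mat_diag_dim)
    finally show ?thesis .
  qed
  have key: "w i k * complex_of_real (f (lam k)) = w i k * complex_of_real (f (q i))"
    if ik: "i < N" "k < N" for i k
  proof (cases "U $$ (i,k) = 0")
    case True then show ?thesis by (simp add: w_def)
  next
    case False
    have "(A * U) $$ (i,k) = (U * mat_diag N (\<lambda>i. complex_of_real (lam i))) $$ (i,k)"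
      using AU2 by simp
    then have "complex_of_real (q i) * U $$ (i,k) = U $$ (i,k) * complex_of_real (lam k)"
      unfolding A_def using ik U
      by (simp add: mat_diag_mult_left[OF U] mat_diag_mult_right[OF U])
    then have "q i = lam k" using False by (simp add: mult.commute)
    then show ?thesis by simp
  qed
  have "(\<Sum>k<N. complex_of_real (f (lam k))) = (\<Sum>k<N. \<Sum>i<N. w i k * complex_of_real (f (lam k)))"
    using unitary_sums(1)[OF Uu] by (simp add: w_def sum_distrib_right[symmetric])
  also have "\<dots> = (\<Sum>k<N. \<Sum>i<N. w i k * complex_of_real (f (q i)))"
    using key by (intro sum.cong refl) auto
  also have "\<dots> = (\<Sum>i<N. (\<Sum>k<N. w i k) * complex_of_real (f (q i)))"
    by (subst sum.swap) (simp add: sum_distrib_right)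
  also have "\<dots> = (\<Sum>i<N. complex_of_real (f (q i)))"
    using unitary_sums(2)[OF Uu] by (simp add: w_def)
  finally show ?thesis using tr unfolding A_def by simp
qed

lemma vne_diag:
  fixes q :: "nat \<Rightarrow> real"
  shows "von_neumann_entropy (mat_diag N (\<lambda>i. complex_of_real (q i))) = - (\<Sum>i<N. q i * ln (q i))"
  unfolding von_neumann_entropy_def hmf_diag by simp



lemma nonincr_deriv:
  fixes f f' :: "real \<Rightarrow> real"
  assumes d: "\<And>t. t \<ge> 0 \<Longrightarrow> (f has_real_derivative f' t) (at t within {0..})"
    and n: "\<And>t. t \<ge> 0 \<Longrightarrow> f' t \<le> 0"
    and st: "0 \<le> s" "s \<le> t"
  shows "f t \<le> f s"
proof -
  have "(\<lambda>x. - f x) s \<le> (\<lambda>x. - f x) t"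
  proof (rule DERIV_nonneg_imp_increasing_open[OF st(2)])
    fix x assume x: "s < x" "x < t"
    have x0: "x \<ge> 0" "x \<in> {0<..}" using x st by auto
    have "(f has_real_derivative f' x) (at x within {0<..})"
      by (rule DERIV_subset[OF d[OF x0(1)]]) auto
    then have "(f has_real_derivative f' x) (at x)"
      using at_within_open[OF x0(2) open_greaterThan] by simp
    then have "((\<lambda>x. - f x) has_real_derivative - f' x) (at x)"
      by (rule DERIV_minus)
    moreover have "0 \<le> - f' x" using n[OF x0(1)] by simp
    ultimately show "\<exists>y. ((\<lambda>x. - f x) has_real_derivative y) (at x) \<and> 0 \<le> y"
      by blast
  next
    have c: "continuous (at x within {0..}) f" if "x \<ge> 0" for x
      using d[OF that] by (rule DERIV_continuous)
    have "continuous_on {s..t} f"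
      unfolding continuous_on_eq_continuous_within
    proof
      fix x assume "x \<in> {s..t}"
      then have "x \<ge> 0" using st by simp
      have "{s..t} \<subseteq> {0..}" using st by auto
      then show "continuous (at x within {s..t}) f"
        by (rule continuous_within_subset[OF c[OF \<open>x \<ge> 0\<close>]])
    qed
    then show "continuous_on {s..t} (\<lambda>x. - f x)" by (rule continuous_on_minus)
  qed
  then show ?thesis by simp
qed



definition Lap :: "nat \<Rightarrow> (nat \<Rightarrow> real) \<Rightarrow> nat \<Rightarrow> real" where
  "Lap N p i = (if 1 \<le> i then p (i - 1) - p i else 0) + (if i + 1 < N then p (i + 1) - p i else 0)"

lemma sbp: "(\<Sum>i<N. g i * Lap N p i) = - (\<Sum>k<N - 1. (g (k+1) - g k) * (p (k+1) - p k))"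
proof (cases N)
  case 0 then show ?thesis by simp
next
  case (Suc n)
  have "(\<Sum>i<N. g i * Lap N p i) = (\<Sum>i<Suc n. g i * (if 1 \<le> i then p (i - 1) - p i else 0))
      + (\<Sum>i<Suc n. g i * (if i < n then p (i + 1) - p i else 0))"
    unfolding Lap_def Suc distrib_left sum.distrib by simp
  also have "(\<Sum>i<Suc n. g i * (if 1 \<le> i then p (i - 1) - p i else 0)) = (\<Sum>i<n. g (i+1) * (p i - p (i+1)))"
    unfolding sum.lessThan_Suc_shift by simp
  also have "(\<Sum>i<Suc n. g i * (if i < n then p (i + 1) - p i else 0)) = (\<Sum>i<n. g i * (p (i+1) - p i))"
    by simp
  also have "(\<Sum>i<n. g (i+1) * (p i - p (i+1))) + (\<Sum>i<n. g i * (p (i+1) - p i))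
     = - (\<Sum>k<n. (g (k+1) - g k) * (p (k+1) - p k))"
    unfolding sum.distrib[symmetric] sum_negf[symmetric] by (rule sum.cong) (auto simp: algebra_simps)
  finally show ?thesis unfolding Suc by simp
qed



lemma deriv_minsq: "((\<lambda>x::real. (min x 0)^2) has_real_derivative 2 * min x 0) (at x)"
proof (cases x "0::real" rule: linorder_cases)
  case less
  have d: "((\<lambda>x::real. x^2) has_real_derivative 2 * x) (at x)"
    using DERIV_pow[of 2 x] by simp
  have "\<forall>\<^sub>F y in nhds x. y^2 = (min y 0)^2"
    using eventually_nhds_in_open[of "{..<0}" x] less
    by (auto elim!: eventually_mono)
  from DERIV_cong_ev[OF refl this refl] d less show ?thesis by simp
next
  case greater
  have d: "((\<lambda>x::real. 0) has_real_derivative 0) (at x)" by (rule DERIV_const)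
  have "\<forall>\<^sub>F y in nhds x. (0::real) = (min y 0)^2"
    using eventually_nhds_in_open[of "{0<..}" x] greater
    by (auto elim!: eventually_mono)
  from DERIV_cong_ev[OF refl this refl] d greater show ?thesis by simp
next
  case equal
  have "((\<lambda>h. ((min (0 + h) 0)^2 - (min 0 0)^2) / h) \<longlongrightarrow> 0) (at (0::real))"
  proof (rule tendsto_sandwich[of "\<lambda>h. - \<bar>h\<bar>" _ _ "\<lambda>h. \<bar>h\<bar>"])
    have "- \<bar>h\<bar> \<le> ((min (0 + h) 0)^2 - (min 0 0)^2) / (h::real) \<and>
          ((min (0 + h) 0)^2 - (min 0 0)^2) / (h::real) \<le> \<bar>h\<bar>" for h
    proof (cases "h < 0")
      case True
      then have "((min (0 + h) 0)^2 - (min 0 0)^2) / (h::real) = h"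
        by (simp add: power2_eq_square)
      then show ?thesis by (subst (1 2) \<open>_ = h\<close>) linarith
    next
      case False
      then have eq0: "((min (0 + h) 0)^2 - (min 0 0)^2) / (h::real) = 0"
        by simp
      show ?thesis by (subst (1 2) eq0) linarith
    qed
    then show "\<forall>\<^sub>F h in at 0. - \<bar>h\<bar> \<le> ((min (0 + h) 0)^2 - (min 0 0)^2) / (h::real)"
      and "\<forall>\<^sub>F h in at 0. ((min (0 + h) 0)^2 - (min 0 0)^2) / (h::real) \<le> \<bar>h\<bar>"
      by (auto intro: always_eventually)
    have "((\<lambda>h. \<bar>h\<bar>) \<longlongrightarrow> \<bar>0::real\<bar>) (at 0)" by (intro tendsto_intros)
    then show "((\<lambda>h. \<bar>h\<bar>) \<longlongrightarrow> (0::real)) (at 0)" by simp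
    then show "((\<lambda>h. - \<bar>h\<bar>) \<longlongrightarrow> (0::real)) (at 0)" using tendsto_minus by fastforce
  qed
  then show ?thesis using equal by (simp add: DERIV_def)
qed



lemma xlnx_lim:
  fixes x :: real assumes "x \<ge> 0"
  shows "((\<lambda>e. (x + e) * ln (x + e)) \<longlongrightarrow> x * ln x) (at_right 0)"
proof (cases "x = 0")
  case True
  have "((\<lambda>e::real. e * ln e) \<longlongrightarrow> 0) (at_right 0)"
  proof (rule tendsto_sandwich[of "\<lambda>e. - 2 * sqrt e" _ _ "\<lambda>e. 0"])
    have ev: "\<forall>\<^sub>F e in at_right (0::real). 0 < e \<and> e < 1"
      by (intro eventually_conj eventually_at_right_less) (simp add: eventually_at_right_field, rule exI[of _ 1], simp)
    show "\<forall>\<^sub>F e in at_right 0. - 2 * sqrt e \<le> e * ln (e::real)"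
      using ev
    proof (rule eventually_mono)
      fix e :: real assume e: "0 < e \<and> e < 1"
      define y where "y = 1 / sqrt e"
      have y: "y > 0" using e by (simp add: y_def)
      have l: "ln y \<le> y - 1" using y by (rule ln_le_minus_one)
      have "ln e = 2 * ln (sqrt e)" using e by (simp add: ln_sqrt)
      also have "ln (sqrt e) = - ln y" using e by (simp add: y_def ln_div)
      finally have le: "ln e = - 2 * ln y" by simp
      have ey: "e * y = sqrt e" using e by (simp add: y_def real_div_sqrt)
      have "e * ln y \<le> e * (y - 1)" using l e by (intro mult_left_mono) auto
      then have "e * ln y \<le> sqrt e" using ey e by (simp add: algebra_simps)
      then show "- 2 * sqrt e \<le> e * ln e" unfolding le by simp
    qed
    show "\<forall>\<^sub>F e in at_right 0. e * ln (e::real) \<le> 0"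
      using ev by (rule eventually_mono) (simp add: mult_nonneg_nonpos)
    have "((\<lambda>e. - 2 * sqrt e) \<longlongrightarrow> - 2 * sqrt (0::real)) (at_right 0)"
      by (intro tendsto_intros)
    then show "((\<lambda>e. - 2 * sqrt e) \<longlongrightarrow> (0::real)) (at_right 0)" by simp
  qed simp
  then show ?thesis using True by simp
next
  case False
  then have "x > 0" using assms by simp
  have "((\<lambda>e. x + e) \<longlongrightarrow> x + 0) (at_right (0::real))"
    by (intro tendsto_intros)
  then have a: "((\<lambda>e. x + e) \<longlongrightarrow> x) (at_right (0::real))" by simp
  have "((\<lambda>e. ln (x + e)) \<longlongrightarrow> ln x) (at_right (0::real))"
    by (rule tendsto_ln[OF a]) (use \<open>x > 0\<close> in simp)
  from tendsto_mult[OF a this] show ?thesis .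
qed



lemma diff_le_S:
  fixes q :: "nat \<Rightarrow> real"
  assumes "i < N" "j < N"
  shows "\<bar>q i - q j\<bar> \<le> (\<Sum>k<N - 1. \<bar>q (k+1) - q k\<bar>)"
proof -
  have gen: "\<bar>q j - q i\<bar> \<le> (\<Sum>k<N - 1. \<bar>q (k+1) - q k\<bar>)" if "i \<le> j" "j < N" for i j
  proof -
    have "q j - q i = (\<Sum>k=i..<j. q (Suc k) - q k)" using sum_Suc_diff'[OF \<open>i \<le> j\<close>, of q] by simp
    then have "\<bar>q j - q i\<bar> \<le> (\<Sum>k=i..<j. \<bar>q (Suc k) - q k\<bar>)"
      by (simp add: sum_abs)
    also have "\<dots> \<le> (\<Sum>k<N - 1. \<bar>q (Suc k) - q k\<bar>)"
      by (rule sum_mono2) (use that in auto)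
    finally show ?thesis by simp
  qed
  show ?thesis
  proof (cases "i \<le> j")
    case True then show ?thesis using gen[of i j] assms by (simp add: abs_minus_commute)
  next
    case False then show ?thesis using gen[of j i] assms by simp
  qed
qed

lemma poincare:
  fixes q :: "nat \<Rightarrow> real"
  assumes N: "N \<ge> 1" and s1: "(\<Sum>i<N. q i) = 1"
  shows "(\<Sum>i<N. (q i - 1 / N)^2) \<le> real N ^ 3 * (\<Sum>k<N - 1. (q (k+1) - q k)^2)"
proof -
  define S where "S = (\<Sum>k<N - 1. \<bar>q (k+1) - q k\<bar>)"
  define D where "D = (\<Sum>k<N - 1. (q (k+1) - q k)^2)"
  have Npos: "real N > 0" using N by simp
  have S0: "S \<ge> 0" unfolding S_def by (simp add: sum_nonneg)
  have a: "\<bar>q i - 1 / N\<bar> \<le> S" if "i < N" for i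
  proof -
    have "real N * q i - 1 = (\<Sum>j<N. q i - q j)"
      using s1 by (simp add: sum_subtractf)
    then have "\<bar>real N * q i - 1\<bar> \<le> (\<Sum>j<N. \<bar>q i - q j\<bar>)"
      by (simp add: sum_abs)
    also have "\<dots> \<le> (\<Sum>j<N. S)"
      unfolding S_def by (rule sum_mono) (use diff_le_S that in auto)
    also have "\<dots> = real N * S" by simp
    finally have "\<bar>real N * q i - 1\<bar> \<le> real N * S" .
    moreover have "real N * q i - 1 = real N * (q i - 1 / N)" using Npos by (simp add: field_simps)
    ultimately have "real N * \<bar>q i - 1 / N\<bar> \<le> real N * S" by (simp add: abs_mult)
    then show ?thesis using Npos by simp
  qed
  have D0: "D \<ge> 0" unfolding D_def by (simp add: sum_nonneg)
  have b: "S \<le> real N * sqrt D"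
  proof -
    have "\<bar>q (k+1) - q k\<bar> \<le> sqrt D" if "k \<in> {..<N - 1}" for k
    proof -
      have "(q (k+1) - q k)^2 \<le> D" unfolding D_def
        by (rule member_le_sum[of k, where f = "\<lambda>k. (q (k+1) - q k)^2"]) (use that in auto)
      then have "sqrt ((q (k+1) - q k)^2) \<le> sqrt D" by (rule real_sqrt_le_mono)
      then show ?thesis by simp
    qed
    then have "S \<le> real (card {..<N - 1}) * sqrt D" unfolding S_def by (rule sum_bounded_above)
    also have "\<dots> \<le> real N * sqrt D" using D0 by (intro mult_right_mono) auto
    finally show ?thesis .
  qed
  have "S^2 \<le> (real N * sqrt D)^2" using b S0 by (intro power_mono) auto
  also have "\<dots> = real N ^ 2 * D" using D0 by (simp add: power_mult_distrib)
  finally have S2: "S^2 \<le> real N ^ 2 * D" .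
  have "(\<Sum>i<N. (q i - 1 / N)^2) \<le> (\<Sum>i<N. S^2)"
  proof (rule sum_mono)
    fix i assume "i \<in> {..<N}"
    then have "\<bar>q i - 1 / N\<bar> \<le> S" using a by simp
    then have "\<bar>q i - 1 / N\<bar>^2 \<le> S^2" by (intro power_mono) auto
    then show "(q i - 1 / N)^2 \<le> S^2" by simp
  qed
  also have "\<dots> = real N * S^2" by simp
  also have "\<dots> \<le> real N * (real N ^ 2 * D)" using S2 Npos by (intro mult_left_mono) auto
  also have "\<dots> = real N ^ 3 * D" by (simp add: power3_eq_cube power2_eq_square)
  finally show ?thesis unfolding D_def .
qed





definition Lr :: "nat \<Rightarrow> (nat \<Rightarrow> nat \<Rightarrow> real) \<Rightarrow> nat \<Rightarrow> nat \<Rightarrow> real" where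
  "Lr N X i j = (if 1 \<le> i \<and> 1 \<le> j then X (i-1) (j-1) else 0)
     + (if i + 1 < N \<and> j + 1 < N then X (i+1) (j+1) else 0) - (dg N i + dg N j) / 2 * X i j"

lemma shift2:
  fixes g :: "nat \<Rightarrow> nat \<Rightarrow> real"
  shows "(\<Sum>i<N. \<Sum>j<N. if 1 \<le> i \<and> 1 \<le> j then g (i-1) (j-1) else 0)
       = (\<Sum>i<N. \<Sum>j<N. if i + 1 < N \<and> j + 1 < N then g i j else 0)"
proof (cases N)
  case 0 then show ?thesis by simp
next
  case (Suc n)
  have "(\<Sum>i<Suc n. \<Sum>j<Suc n. if 1 \<le> i \<and> 1 \<le> j then g (i-1) (j-1) else 0)
      = (\<Sum>i<n. \<Sum>j<Suc n. if 1 \<le> j then g i (j-1) else 0)"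
    unfolding sum.lessThan_Suc_shift by simp
  also have "\<dots> = (\<Sum>i<n. \<Sum>j<n. g i j)"
    unfolding sum.lessThan_Suc_shift by simp
  also have "\<dots> = (\<Sum>i<n. \<Sum>j<Suc n. if i < n \<and> j < n then g i j else 0)"
    by (rule sum.cong) (simp_all add: sum.lessThan_Suc)
  also have "\<dots> = (\<Sum>i<Suc n. \<Sum>j<Suc n. if i < n \<and> j < n then g i j else 0)"
    by (simp add: sum.lessThan_Suc[of _ n])
  finally show ?thesis unfolding Suc by simp
qed

lemma ab_le: "(a::real) * b \<le> a ^ 2 / 2 + b ^ 2 / 2"
proof -
  have "0 \<le> (a - b) ^ 2" by simp
  then show ?thesis by (simp add: power2_eq_square algebra_simps)
qed

lemma dissip:
  fixes X :: "nat \<Rightarrow> nat \<Rightarrow> real"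
  shows "(\<Sum>i<N. \<Sum>j<N. X i j * Lr N X i j) \<le> 0"
proof -
  define A where "A i j = (1 \<le> i \<and> 1 \<le> j)" for i j :: nat
  define B where "B i j = (i + 1 < N \<and> j + 1 < N)" for i j :: nat
  have sh1: "(\<Sum>i<N. \<Sum>j<N. if A i j then g (i-1) (j-1) else 0)
       = (\<Sum>i<N. \<Sum>j<N. if B i j then g i j else 0)" for g :: "nat \<Rightarrow> nat \<Rightarrow> real"
    unfolding A_def B_def by (rule shift2)
  have sh2: "(\<Sum>i<N. \<Sum>j<N. if B i j then g (i+1) (j+1) else 0)
       = (\<Sum>i<N. \<Sum>j<N. if A i j then g i j else 0)" for g :: "nat \<Rightarrow> nat \<Rightarrow> real"
  proof -
    have "(\<Sum>i<N. \<Sum>j<N. if A i j then g i j else 0)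
       = (\<Sum>i<N. \<Sum>j<N. if A i j then (\<lambda>i j. g (i+1) (j+1)) (i-1) (j-1) else 0)"
      by (intro sum.cong refl) (auto simp: A_def)
    then show ?thesis using sh1[of "\<lambda>i j. g (i+1) (j+1)"] by simp
  qed
  have p1: "(if A i j then X i j * X (i-1) (j-1) else 0)
      \<le> (if A i j then X i j ^ 2 / 2 else 0) + (if A i j then X (i-1) (j-1) ^ 2 / 2 else 0)" for i j
    using ab_le[of "X i j" "X (i-1) (j-1)"] by auto
  have p2: "(if B i j then X i j * X (i+1) (j+1) else 0)
      \<le> (if B i j then X i j ^ 2 / 2 else 0) + (if B i j then X (i+1) (j+1) ^ 2 / 2 else 0)" for i j
    using ab_le[of "X i j" "X (i+1) (j+1)"] by auto
  have p3: "(if A i j then X i j ^ 2 else 0) + (if B i j then X i j ^ 2 else 0)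
      \<le> (dg N i + dg N j) / 2 * X i j ^ 2" if "i < N" "j < N" for i j
  proof -
    have "(if A i j then 1 else 0) + (if B i j then 1 else 0) \<le> (dg N i + dg N j) / (2::real)"
      unfolding A_def B_def dg_def by auto
    then have "((if A i j then 1 else 0) + (if B i j then 1 else 0)) * X i j ^ 2 \<le> (dg N i + dg N j) / (2::real) * X i j ^ 2"
      by (rule mult_right_mono) simp
    then show ?thesis by (auto split: if_splits)
  qed
  have "(\<Sum>i<N. \<Sum>j<N. X i j * Lr N X i j)
     = (\<Sum>i<N. \<Sum>j<N. if A i j then X i j * X (i-1) (j-1) else 0)
     + (\<Sum>i<N. \<Sum>j<N. if B i j then X i j * X (i+1) (j+1) else 0)
     - (\<Sum>i<N. \<Sum>j<N. (dg N i + dg N j) / 2 * X i j ^ 2)"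
    unfolding Lr_def A_def B_def sum.distrib[symmetric] sum_subtractf[symmetric]
    by (intro sum.cong refl) (auto simp: algebra_simps power2_eq_square)
  also have "\<dots> \<le> ((\<Sum>i<N. \<Sum>j<N. if A i j then X i j ^ 2 / 2 else 0) + (\<Sum>i<N. \<Sum>j<N. if A i j then X (i-1) (j-1) ^ 2 / 2 else 0))
     + ((\<Sum>i<N. \<Sum>j<N. if B i j then X i j ^ 2 / 2 else 0) + (\<Sum>i<N. \<Sum>j<N. if B i j then X (i+1) (j+1) ^ 2 / 2 else 0))
     - (\<Sum>i<N. \<Sum>j<N. (dg N i + dg N j) / 2 * X i j ^ 2)"
    unfolding sum.distrib[symmetric]
    by (intro diff_right_mono add_mono sum_mono p1 p2)
  also have "\<dots> = (\<Sum>i<N. \<Sum>j<N. (if A i j then X i j ^ 2 else 0) + (if B i j then X i j ^ 2 else 0))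
     - (\<Sum>i<N. \<Sum>j<N. (dg N i + dg N j) / 2 * X i j ^ 2)"
    unfolding sh1[of "\<lambda>i j. X i j ^ 2 / 2"] sh2[of "\<lambda>i j. X i j ^ 2 / 2"] sum.distrib[symmetric]
    by (intro arg_cong2[where f = minus] sum.cong refl) auto
  also have "\<dots> \<le> 0"
  proof -
    have "(\<Sum>i<N. \<Sum>j<N. (if A i j then X i j ^ 2 else 0) + (if B i j then X i j ^ 2 else 0))
      \<le> (\<Sum>i<N. \<Sum>j<N. (dg N i + dg N j) / 2 * X i j ^ 2)"
      by (intro sum_mono) (use p3 in auto)
    then show ?thesis by linarith
  qed
  finally show ?thesis .
qed


context
  fixes N :: nat and sigma2 :: real and p :: "nat \<Rightarrow> real" and \<rho> :: "real \<Rightarrow> complex mat"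
  assumes N_pos: "N \<ge> 1"
    and sigma_pos: "sigma2 > 0"
    and p_nonneg: "\<And>i. i < N \<Longrightarrow> p i \<ge> 0"
    and p_sum: "(\<Sum>i<N. p i) = 1"
    and dim: "\<And>t. t \<ge> 0 \<Longrightarrow> \<rho> t \<in> carrier_mat N N"
    and init: "\<rho> 0 = mat_diag N (\<lambda>i. complex_of_real (p i))"
    and evol: "\<And>t i j. t \<ge> 0 \<Longrightarrow> i < N \<Longrightarrow> j < N \<Longrightarrow>
      ((\<lambda>s. \<rho> s $$ (i, j)) has_vector_derivative (mkt_generator sigma2 N (\<rho> t) $$ (i, j)))
        (at t within {0..})"
begin

definition qa where "qa i j t = Re (\<rho> t $$ (i,j))"

definition qb where "qb i j t = Im (\<rho> t $$ (i,j))"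

lemma da:
  assumes that: "t \<ge> 0" "i < N" "j < N"
  shows "((\<lambda>s. qa i j s) has_real_derivative sigma2 * Lr N (\<lambda>i j. qa i j t) i j) (at t within {0..})"
proof -
  have "((\<lambda>s. qa i j s) has_real_derivative Re (mkt_generator sigma2 N (\<rho> t) $$ (i, j))) (at t within {0..})"
    unfolding qa_def by (rule has_field_derivative_Re[OF evol[OF that]])
  moreover have "Re (mkt_generator sigma2 N (\<rho> t) $$ (i, j)) = sigma2 * Lr N (\<lambda>i j. qa i j t) i j"
    unfolding gen_entry[OF dim[OF that(1)] that(2,3)] Lr_def qa_def by simp
  ultimately show ?thesis by simp
qed

lemma db:
  assumes that: "t \<ge> 0" "i < N" "j < N"
  shows "((\<lambda>s. qb i j s) has_real_derivative sigma2 * Lr N (\<lambda>i j. qb i j t) i j) (at t within {0..})"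
proof -
  have "((\<lambda>s. qb i j s) has_real_derivative Im (mkt_generator sigma2 N (\<rho> t) $$ (i, j))) (at t within {0..})"
    unfolding qb_def by (rule has_field_derivative_Im[OF evol[OF that]])
  moreover have "Im (mkt_generator sigma2 N (\<rho> t) $$ (i, j)) = sigma2 * Lr N (\<lambda>i j. qb i j t) i j"
    unfolding gen_entry[OF dim[OF that(1)] that(2,3)] Lr_def qb_def by simp
  ultimately show ?thesis by simp
qed

definition qX where "qX i j t = (if i = j then 0 else qa i j t)"

lemma dX:
  assumes that: "t \<ge> 0" "i < N" "j < N"
  shows "((\<lambda>s. qX i j s) has_real_derivative sigma2 * Lr N (\<lambda>i j. qX i j t) i j) (at t within {0..})"
proof (cases "i = j")
  case True
  have "Lr N (\<lambda>i j. qX i j t) i j = 0" unfolding Lr_def qX_def True by simp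
  then show ?thesis unfolding qX_def using True by (simp add: DERIV_const)
next
  case False
  have "Lr N (\<lambda>i j. qX i j t) i j = Lr N (\<lambda>i j. qa i j t) i j"
    unfolding Lr_def qX_def using False by auto
  then show ?thesis unfolding qX_def using False da[OF that] by simp
qed

definition qE where "qE t = (\<Sum>i<N. \<Sum>j<N. qX i j t ^ 2 + qb i j t ^ 2)"

lemma dE:
  assumes that: "t \<ge> 0"
  shows "(qE has_real_derivative 2 * sigma2 * ((\<Sum>i<N. \<Sum>j<N. qX i j t * Lr N (\<lambda>i j. qX i j t) i j) + (\<Sum>i<N. \<Sum>j<N. qb i j t * Lr N (\<lambda>i j. qb i j t) i j))) (at t within {0..})"
proof -
  have "(qE has_real_derivative (\<Sum>i<N. \<Sum>j<N. 2 * ((sigma2 * Lr N (\<lambda>i j. qX i j t) i j) * qX i j t)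
      + 2 * ((sigma2 * Lr N (\<lambda>i j. qb i j t) i j) * qb i j t))) (at t within {0..})"
    unfolding qE_def
    apply (intro DERIV_sum DERIV_add)
    using DERIV_power[OF dX[OF that], of _ _ 2] DERIV_power[OF db[OF that], of _ _ 2] by auto
  moreover have "(\<Sum>i<N. \<Sum>j<N. 2 * ((sigma2 * Lr N (\<lambda>i j. qX i j t) i j) * qX i j t)
      + 2 * ((sigma2 * Lr N (\<lambda>i j. qb i j t) i j) * qb i j t))
    = 2 * sigma2 * ((\<Sum>i<N. \<Sum>j<N. qX i j t * Lr N (\<lambda>i j. qX i j t) i j)
      + (\<Sum>i<N. \<Sum>j<N. qb i j t * Lr N (\<lambda>i j. qb i j t) i j))"
    by (simp add: sum.distrib sum_distrib_left algebra_simps)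
  ultimately show ?thesis by simp
qed

lemma E0:
  shows "qE 0 = 0"
  unfolding qE_def qX_def qa_def qb_def init by (intro sum.neutral ballI) (auto simp: mat_diag_def)

lemma Ele:
  assumes that: "t \<ge> 0"
  shows "qE t \<le> 0"
proof -
  have "qE t \<le> qE 0"
  proof (rule nonincr_deriv[OF dE])
    fix t :: real
    have "(\<Sum>i<N. \<Sum>j<N. qX i j t * Lr N (\<lambda>i j. qX i j t) i j) \<le> 0" by (rule dissip)
    moreover have "(\<Sum>i<N. \<Sum>j<N. qb i j t * Lr N (\<lambda>i j. qb i j t) i j) \<le> 0" by (rule dissip)
    ultimately show "2 * sigma2 * ((\<Sum>i<N. \<Sum>j<N. qX i j t * Lr N (\<lambda>i j. qX i j t) i j)
      + (\<Sum>i<N. \<Sum>j<N. qb i j t * Lr N (\<lambda>i j. qb i j t) i j)) \<le> 0"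
      using sigma_pos by (simp add: mult_nonneg_nonpos)
  qed (use that in auto)
  then show ?thesis using E0 by simp
qed

lemma XB0:
  assumes that: "t \<ge> 0" "i < N" "j < N"
  shows "qX i j t = 0 \<and> qb i j t = 0"
proof -
  have nn: "\<forall>i\<in>{..<N}. 0 \<le> (\<Sum>j<N. qX i j t ^ 2 + qb i j t ^ 2)" by (intro ballI sum_nonneg) simp
  have "qE t = 0" using Ele[OF that(1)] nn unfolding qE_def by (meson order.antisym sum_nonneg)
  then have "(\<Sum>j<N. qX i j t ^ 2 + qb i j t ^ 2) = 0"
    using sum_nonneg_eq_0_iff[of "{..<N}", OF _ nn[rule_format]] that unfolding qE_def by auto
  then have "qX i j t ^ 2 + qb i j t ^ 2 = 0"
    using sum_nonneg_eq_0_iff[of "{..<N}" "\<lambda>j. qX i j t ^ 2 + qb i j t ^ 2"] that by auto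
  then show ?thesis by (simp add: sum_power2_eq_zero_iff)
qed

definition qq where "qq i t = qa i i t"

lemma diag:
  assumes that: "t \<ge> 0"
  shows "\<rho> t = mat_diag N (\<lambda>i. complex_of_real (qq i t))"
proof (rule eq_matI)
  fix i j assume ij: "i < dim_row (mat_diag N (\<lambda>i. complex_of_real (qq i t)))"
    "j < dim_col (mat_diag N (\<lambda>i. complex_of_real (qq i t)))"
  then have ij': "i < N" "j < N" by (auto simp: mat_diag_def)
  show "\<rho> t $$ (i, j) = mat_diag N (\<lambda>i. complex_of_real (qq i t)) $$ (i, j)"
  proof (cases "i = j")
    case True
    then show ?thesis using XB0[OF that ij'] ij' unfolding qq_def qa_def qb_def
      by (auto simp: mat_diag_def complex_eq_iff)
  next
    case False
    then show ?thesis using XB0[OF that ij'] ij' unfolding qX_def qa_def qb_def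
      by (auto simp: mat_diag_def complex_eq_iff)
  qed
qed (use dim[OF that] in \<open>auto simp: mat_diag_def\<close>)

lemma q0:
  assumes that: "i < N"
  shows "qq i 0 = p i"
  unfolding qq_def qa_def init using that by (simp add: mat_diag_def)

lemma dq:
  assumes that: "t \<ge> 0" "i < N"
  shows "((\<lambda>s. qq i s) has_real_derivative sigma2 * Lap N (\<lambda>k. qq k t) i) (at t within {0..})"
proof -
  have "Lr N (\<lambda>i j. qa i j t) i i = Lap N (\<lambda>k. qq k t) i"
    unfolding Lr_def Lap_def dg_def qq_def by (auto simp: algebra_simps)
  then show ?thesis using da[OF that(1) that(2) that(2)] unfolding qq_def by simp
qed

lemma dsum:
  assumes that: "t \<ge> 0" and g: "\<And>i. i < N \<Longrightarrow> (g has_real_derivative g' (qq i t)) (at (qq i t))"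
  shows "((\<lambda>s. \<Sum>i<N. g (qq i s) * cc i) has_real_derivative (\<Sum>i<N. g' (qq i t) * cc i * (sigma2 * Lap N (\<lambda>k. qq k t) i))) (at t within {0..})"
proof -
  have "((\<lambda>s. g (qq i s) * cc i) has_real_derivative g' (qq i t) * cc i * (sigma2 * Lap N (\<lambda>k. qq k t) i)) (at t within {0..})"
    if "i < N" for i
    using DERIV_cmult[OF DERIV_chain2[OF g[OF that] dq[OF \<open>t \<ge> 0\<close> that]], of "cc i"]
    by (simp add: mult_ac)
  then show ?thesis by (intro DERIV_sum) auto
qed

lemma qsum:
  assumes that: "t \<ge> 0"
  shows "(\<Sum>i<N. qq i t) = 1"
proof -
  have d: "((\<lambda>s. \<Sum>i<N. (\<lambda>x. x) (qq i s) * cc) has_real_derivative 0) (at t within {0..})" if "t \<ge> 0" for t cc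
  proof -
    have "(\<Sum>i<N. 1 * cc * (sigma2 * Lap N (\<lambda>k. qq k t) i)) = cc * sigma2 * (\<Sum>i<N. 1 * Lap N (\<lambda>k. qq k t) i)"
      by (simp add: sum_distrib_left mult_ac)
    also have "\<dots> = 0" unfolding sbp by simp
    finally show ?thesis using dsum[OF that, of "\<lambda>x. x" "\<lambda>_. 1" "\<lambda>_. cc"] by (simp add: DERIV_ident)
  qed
  have "(\<Sum>i<N. qq i t * 1) \<le> (\<Sum>i<N. qq i 0 * 1)"
    by (rule nonincr_deriv[OF d]) (use that in auto)
  moreover have "(\<Sum>i<N. qq i t * (-1)) \<le> (\<Sum>i<N. qq i 0 * (-1))"
    by (rule nonincr_deriv[OF d]) (use that in auto)
  moreover have "(\<Sum>i<N. qq i 0) = 1" using q0 p_sum by simp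
  ultimately show ?thesis by (simp add: sum_negf)
qed

lemma qnn:
  assumes that: "t \<ge> 0" "i < N"
  shows "qq i t \<ge> 0"
proof -
  define W where "W s = (\<Sum>i<N. (\<lambda>x. (min x 0)^2) (qq i s) * 1)" for s
  have dW: "(W has_real_derivative (\<Sum>i<N. 2 * min (qq i s) 0 * 1 * (sigma2 * Lap N (\<lambda>k. qq k s) i))) (at s within {0..})"
    if "s \<ge> 0" for s
    unfolding W_def by (rule dsum[OF that deriv_minsq])
  have "W t \<le> W 0"
  proof (rule nonincr_deriv[OF dW])
    fix s :: real
    have "(\<Sum>i<N. 2 * min (qq i s) 0 * 1 * (sigma2 * Lap N (\<lambda>k. qq k s) i))
        = 2 * sigma2 * (\<Sum>i<N. min (qq i s) 0 * Lap N (\<lambda>k. qq k s) i)"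
      by (simp add: sum_distrib_left mult_ac)
    also have "\<dots> = - 2 * sigma2 * (\<Sum>k<N - 1. (min (qq (k+1) s) 0 - min (qq k s) 0) * (qq (k+1) s - qq k s))"
      unfolding sbp by simp
    also have "\<dots> \<le> 0"
    proof -
      have "(\<Sum>k<N - 1. (min (qq (k+1) s) 0 - min (qq k s) 0) * (qq (k+1) s - qq k s)) \<ge> 0"
      proof (intro sum_nonneg)
        fix k
        show "0 \<le> (min (qq (k+1) s) 0 - min (qq k s) 0) * (qq (k+1) s - qq k s)"
          by (cases "qq (k+1) s \<le> qq k s")
             (auto intro: mult_nonpos_nonpos mult_nonneg_nonneg simp: min_def)
      qed
      then show ?thesis using sigma_pos by (simp add: mult_nonneg_nonneg)
    qed
    finally show "(\<Sum>i<N. 2 * min (qq i s) 0 * 1 * (sigma2 * Lap N (\<lambda>k. qq k s) i)) \<le> 0" .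
  qed (use that in auto)
  moreover have "W 0 = 0" unfolding W_def using q0 p_nonneg by (intro sum.neutral) auto
  ultimately have "W t \<le> 0" by simp
  moreover have "\<forall>i\<in>{..<N}. 0 \<le> (min (qq i t) 0)^2 * 1" by simp
  ultimately have "(min (qq i t) 0)^2 * 1 = 0"
    using sum_nonneg_eq_0_iff[of "{..<N}" "\<lambda>i. (min (qq i t) 0)^2 * 1"] that unfolding W_def
    by (metis (no_types, lifting) finite_lessThan lessThan_iff order.antisym sum_nonneg)
  then show ?thesis by (simp add: min_def split: if_splits)
qed

definition qH where "qH t = - (\<Sum>i<N. qq i t * ln (qq i t))"

lemma vH:
  assumes that: "t \<ge> 0"
  shows "von_neumann_entropy (\<rho> t) = qH t"
  unfolding diag[OF that] vne_diag qH_def ..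

lemma Hmono:
  assumes st: "0 \<le> s" "s \<le> t"
  shows "qH s \<le> qH t"
proof -
  define He where "He e u = (\<Sum>i<N. (\<lambda>x. (x + e) * ln (x + e)) (qq i u) * 1)" for e u
  have He_le: "He e t \<le> He e s" if "e > 0" for e
  proof (rule nonincr_deriv[where f = "He e" and s = s and t = t and f' = "\<lambda>u. (\<Sum>i<N. (ln (qq i u + e) + 1) * 1 * (sigma2 * Lap N (\<lambda>k. qq k u) i))"])
    fix u :: real assume u: "u \<ge> 0"
    have g: "((\<lambda>x. (x + e) * ln (x + e)) has_real_derivative ln (qq i u + e) + 1) (at (qq i u))"
      if "i < N" for i
    proof -
      have pos: "qq i u + e > 0" using qnn[OF u that] \<open>e > 0\<close> by simp
      show ?thesis using pos by (auto intro!: derivative_eq_intros)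
    qed
    show "(He e has_real_derivative (\<Sum>i<N. (ln (qq i u + e) + 1) * 1 * (sigma2 * Lap N (\<lambda>k. qq k u) i))) (at u within {0..})"
      unfolding He_def by (rule dsum[OF u g])
  next
    fix u :: real assume u: "u \<ge> 0"
    have "(\<Sum>i<N. (ln (qq i u + e) + 1) * 1 * (sigma2 * Lap N (\<lambda>k. qq k u) i))
        = sigma2 * (\<Sum>i<N. (ln (qq i u + e) + 1) * Lap N (\<lambda>k. qq k u) i)"
      by (simp add: sum_distrib_left mult_ac)
    also have "\<dots> = - sigma2 * (\<Sum>k<N - 1. ((ln (qq (k+1) u + e) + 1) - (ln (qq k u + e) + 1)) * (qq (k+1) u - qq k u))"
      unfolding sbp by simp
    also have "\<dots> \<le> 0"
    proof -
      have "(\<Sum>k<N - 1. ((ln (qq (k+1) u + e) + 1) - (ln (qq k u + e) + 1)) * (qq (k+1) u - qq k u)) \<ge> 0"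
      proof (intro sum_nonneg)
        fix k assume "k \<in> {..<N - 1}"
        then have k: "k < N" "k + 1 < N" by auto
        have p1: "qq k u + e > 0" "qq (k+1) u + e > 0" using qnn[OF u k(1)] qnn[OF u k(2)] \<open>e > 0\<close> by auto
        show "0 \<le> ((ln (qq (k+1) u + e) + 1) - (ln (qq k u + e) + 1)) * (qq (k+1) u - qq k u)"
        proof (cases "qq (k+1) u \<le> qq k u")
          case True
          then have "ln (qq (k+1) u + e) \<le> ln (qq k u + e)" using p1 by simp
          then show ?thesis using True by (intro mult_nonpos_nonpos) auto
        next
          case False
          then have "ln (qq k u + e) \<le> ln (qq (k+1) u + e)" using p1 by simp
          then show ?thesis using False by (intro mult_nonneg_nonneg) auto
        qed
      qed
      then show ?thesis using sigma_pos by (simp add: mult_nonneg_nonneg)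
    qed
    finally show "(\<Sum>i<N. (ln (qq i u + e) + 1) * 1 * (sigma2 * Lap N (\<lambda>k. qq k u) i)) \<le> 0" .
  qed (use st in auto)
  have lim: "((\<lambda>e. He e u) \<longlongrightarrow> - qH u) (at_right 0)" if "u \<ge> 0" for u
  proof -
    have "((\<lambda>e. He e u) \<longlongrightarrow> (\<Sum>i<N. qq i u * ln (qq i u) * 1)) (at_right 0)"
      unfolding He_def by (intro tendsto_sum tendsto_mult tendsto_const xlnx_lim qnn[OF that]) auto
    then show ?thesis unfolding qH_def by simp
  qed
  have "- qH t \<le> - qH s"
  proof (rule tendsto_le[OF _ lim lim])
    show "\<forall>\<^sub>F e in at_right 0. He e t \<le> He e s"
      using eventually_at_right_less[of "0::real"] by (rule eventually_mono) (rule He_le)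
  qed (use st in auto)
  then show ?thesis by simp
qed

definition qV where "qV t = (\<Sum>i<N. (\<lambda>x. (x - 1 / real N)^2) (qq i t) * 1)"

definition cc where "cc = 2 * sigma2 / real N ^ 3"

lemma Npos:
  shows "real N > 0"
using N_pos by simp

lemma cpos:
  shows "cc > 0"
unfolding cc_def using sigma_pos Npos by simp

lemma Vdecay:
  assumes that: "t \<ge> 0"
  shows "qV t \<le> qV 0 * exp (- cc * t)"
proof -
  define D where "D u = (\<Sum>k<N - 1. (qq (k+1) u - qq k u)^2)" for u
  have dV: "(qV has_real_derivative - 2 * sigma2 * D u) (at u within {0..})" if "u \<ge> 0" for u
  proof -
    have g: "((\<lambda>x. (x - 1 / real N)^2) has_real_derivative 2 * (qq i u - 1 / real N)) (at (qq i u))" for i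
      by (auto intro!: derivative_eq_intros)
    have d1: "(qV has_real_derivative (\<Sum>i<N. 2 * (qq i u - 1 / real N) * 1 * (sigma2 * Lap N (\<lambda>k. qq k u) i))) (at u within {0..})"
      unfolding qV_def by (rule dsum[OF that g])
    have "(\<Sum>i<N. 2 * (qq i u - 1 / real N) * 1 * (sigma2 * Lap N (\<lambda>k. qq k u) i))
        = 2 * sigma2 * (\<Sum>i<N. (qq i u - 1 / real N) * Lap N (\<lambda>k. qq k u) i)"
      unfolding sum_distrib_left by (rule sum.cong) (simp_all add: mult_ac)
    also have "\<dots> = - 2 * sigma2 * D u"
      unfolding sbp D_def by (simp add: power2_eq_square)
    finally have eq: "(\<Sum>i<N. 2 * (qq i u - 1 / real N) * 1 * (sigma2 * Lap N (\<lambda>k. qq k u) i)) = - 2 * sigma2 * D u" .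
    show ?thesis using d1 unfolding eq .
  qed
  have VD: "qV u \<le> real N ^ 3 * D u" if "u \<ge> 0" for u
    using poincare[OF N_pos qsum[OF that]] unfolding qV_def D_def by simp
  define G where "G u = exp (cc * u) * qV u" for u
  have dG: "(G has_real_derivative exp (cc * u) * cc * qV u + - 2 * sigma2 * D u * exp (cc * u)) (at u within {0..})"
    if u: "u \<ge> 0" for u
  proof -
    have "((\<lambda>u. exp (cc * u)) has_real_derivative exp (cc * u) * cc) (at u within {0..})"
      by (auto intro!: derivative_eq_intros)
    from DERIV_mult[OF this dV[OF u]]
    show ?thesis unfolding G_def by simp
  qed
  have "G t \<le> G 0"
  proof (rule nonincr_deriv[OF dG])
    fix u :: real assume u: "u \<ge> 0"
    have "cc * qV u \<le> cc * (real N ^ 3 * D u)" using VD[OF u] cpos by (intro mult_left_mono) auto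
    also have "\<dots> = 2 * sigma2 * D u" unfolding cc_def using Npos by simp
    finally have "cc * qV u - 2 * sigma2 * D u \<le> 0" by simp
    then have "exp (cc * u) * (cc * qV u - 2 * sigma2 * D u) \<le> 0"
      by (intro mult_nonneg_nonpos) auto
    then show "exp (cc * u) * cc * qV u + - 2 * sigma2 * D u * exp (cc * u) \<le> 0"
      by (simp add: algebra_simps)
  qed (use that in auto)
  then have "exp (cc * t) * qV t \<le> qV 0" unfolding G_def by simp
  then have "qV t \<le> qV 0 / exp (cc * t)" by (simp add: field_simps)
  then show ?thesis by (simp add: exp_minus field_simps)
qed

lemma V0:
  shows "qV t \<ge> 0"
unfolding qV_def by (intro sum_nonneg) simp

lemma expt:
  shows "((\<lambda>t. exp (- cc * t)) \<longlongrightarrow> 0) at_top"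
proof -
  have "filterlim (\<lambda>t. cc * t) at_top at_top"
    by (rule filterlim_tendsto_pos_mult_at_top[OF tendsto_const cpos filterlim_ident])
  then have "filterlim (\<lambda>t. - (cc * t)) at_bot at_top"
    using filterlim_uminus_at_top by auto
  from filterlim_compose[OF exp_at_bot this] show ?thesis by simp
qed

lemma Vlim:
  shows "(qV \<longlongrightarrow> 0) at_top"
proof (rule tendsto_sandwich[of "\<lambda>_. 0" _ _ "\<lambda>t. qV 0 * exp (- cc * t)"])
  show "\<forall>\<^sub>F t in at_top. 0 \<le> qV t" using V0 by simp
  show "\<forall>\<^sub>F t in at_top. qV t \<le> qV 0 * exp (- cc * t)"
    using eventually_ge_at_top[of "0::real"] by (rule eventually_mono) (rule Vdecay)
  show "((\<lambda>t. qV 0 * exp (- cc * t)) \<longlongrightarrow> 0) at_top"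
    using tendsto_mult_right_zero[OF expt] by simp
qed simp

lemma qlim:
  assumes that: "i < N"
  shows "((\<lambda>t. qq i t) \<longlongrightarrow> 1 / real N) at_top"
proof -
  have "((\<lambda>t. (qq i t - 1 / real N)^2) \<longlongrightarrow> 0) at_top"
  proof (rule tendsto_sandwich[of "\<lambda>_. 0" _ _ qV])
    show "\<forall>\<^sub>F t in at_top. (qq i t - 1 / real N)^2 \<le> qV t"
    proof (intro always_eventually allI)
      fix t
      have "(\<lambda>j. (qq j t - 1 / real N)^2 * 1) i \<le> (\<Sum>j<N. (qq j t - 1 / real N)^2 * 1)"
        by (rule member_le_sum) (use that in auto)
      then show "(qq i t - 1 / real N)^2 \<le> qV t" unfolding qV_def by simp
    qed
  qed (use Vlim in auto)
  from tendsto_real_sqrt[OF this]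
  have "((\<lambda>t. \<bar>qq i t - 1 / real N\<bar>) \<longlongrightarrow> 0) at_top" by simp
  then have "((\<lambda>t. qq i t - 1 / real N) \<longlongrightarrow> 0) at_top"
    by (simp add: tendsto_rabs_zero_iff)
  from tendsto_add[OF this tendsto_const[of "1 / real N"]] show ?thesis by simp
qed

lemma Hlim:
  shows "(qH \<longlongrightarrow> ln (real N)) at_top"
proof -
  have l: "((\<lambda>t. qq i t * ln (qq i t)) \<longlongrightarrow> 1 / real N * ln (1 / real N)) at_top" if "i < N" for i
  proof (rule tendsto_mult)
    show "((\<lambda>t. qq i t) \<longlongrightarrow> 1 / real N) at_top" by (rule qlim[OF that])
    show "((\<lambda>t. ln (qq i t)) \<longlongrightarrow> ln (1 / real N)) at_top"
      by (rule tendsto_ln[OF qlim[OF that]]) (use Npos in simp)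
  qed
  have "((\<lambda>t. \<Sum>i<N. qq i t * ln (qq i t)) \<longlongrightarrow> (\<Sum>i<N. 1 / real N * ln (1 / real N))) at_top"
    by (rule tendsto_sum) (use l in simp)
  then have "((\<lambda>t. - (\<Sum>i<N. qq i t * ln (qq i t))) \<longlongrightarrow> - (\<Sum>i<N. 1 / real N * ln (1 / real N))) at_top"
    by (rule tendsto_minus)
  moreover have "- (\<Sum>i<N. 1 / real N * ln (1 / real N)) = ln (real N)"
    using Npos by (simp add: ln_div)
  ultimately show ?thesis unfolding qH_def by simp
qed

lemma main_ctx:
  shows "mono_on {0..} (\<lambda>t. von_neumann_entropy (\<rho> t))
    \<and> ((\<lambda>t. von_neumann_entropy (\<rho> t)) \<longlongrightarrow> ln (real N)) at_top"
proof
  show "mono_on {0..} (\<lambda>t. von_neumann_entropy (\<rho> t))"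
  proof (rule mono_onI)
    fix r s :: real assume "r \<in> {0..}" "s \<in> {0..}" "r \<le> s"
    then show "von_neumann_entropy (\<rho> r) \<le> von_neumann_entropy (\<rho> s)"
      using vH[of r] vH[of s] Hmono[of r s] by simp
  qed
  have "\<forall>\<^sub>F t in at_top. qH t = von_neumann_entropy (\<rho> t)"
    using eventually_ge_at_top[of "0::real"] by (rule eventually_mono) (simp add: vH)
  then show "((\<lambda>t. von_neumann_entropy (\<rho> t)) \<longlongrightarrow> ln (real N)) at_top"
    by (rule Lim_transform_eventually[OF Hlim])
qed

end

theorem mainTheorem3:
  fixes N :: nat and sigma2 :: real and p :: "nat \<Rightarrow> real" and \<rho> :: "real \<Rightarrow> complex mat"
  assumes N_pos: "N \<ge> 1"
    and sigma_pos: "sigma2 > 0"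
    and p_nonneg: "\<And>i. i < N \<Longrightarrow> p i \<ge> 0"
    and p_sum: "(\<Sum>i<N. p i) = 1"
    and dim: "\<And>t. t \<ge> 0 \<Longrightarrow> \<rho> t \<in> carrier_mat N N"
    and init: "\<rho> 0 = mat_diag N (\<lambda>i. complex_of_real (p i))"
    and evol: "\<And>t i j. t \<ge> 0 \<Longrightarrow> i < N \<Longrightarrow> j < N \<Longrightarrow>
      ((\<lambda>s. \<rho> s $$ (i, j)) has_vector_derivative (mkt_generator sigma2 N (\<rho> t) $$ (i, j)))
        (at t within {0..})"
  shows "mono_on {0..} (\<lambda>t. von_neumann_entropy (\<rho> t))
    \<and> ((\<lambda>t. von_neumann_entropy (\<rho> t)) \<longlongrightarrow> ln (real N)) at_top"
  using assms by (rule main_ctx)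

thm_deps mainTheorem3

end
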